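(* Let $I\subset[0,\infty)$ be an interval, let $a,b\in I^\circ$ with $a<b$, and let $f:I\to\mathbb{R}$ be twice differentiable on $I^\circ$ with $f''\in L^1([a,b])$. Let $q>1$, $p=\frac{q}{q-1}$, and assume $|f''|^q$ is $h$-convex on $[a,b]$. Then $$\left|\frac{1}{b-a}\int_a^b f(x)\,dx-f\Big(\frac{a+b}{2}\Big)\right|\le \frac{(b-a)^2}{8}\Big(\frac{1}{2p+1}\Big)^{1/p}\Big(\big[|f''(a)|^q+|f''(b)|^q\big]\int_0^1 h(t)\,dt\Big)^{1/q}.$$
   Context: Let $J$ be an interval with $(0,1)\subseteq J$ and $h:J\to\mathbb{R}$ a non-negative function, not identically zero, which is Lebesgue integrable on $(0,1)$. A non-negative function $g$ defined on an interval $K$ is called $h$-convex on $K$ if for all $x,y\in K$ and all $t\in(0,1)$: $g(tx+(1-t)y)\le h(t)g(x)+h(1-t)g(y)$. $I^\circ$ denotes the interior of $I$. *)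

theory Defs
  imports "HOL-Analysis.Analysis"
begin

definition h_convex_on :: "(real \<Rightarrow> real) \<Rightarrow> real set \<Rightarrow> (real \<Rightarrow> real) \<Rightarrow> bool" where
  "h_convex_on h K g \<longleftrightarrow>
     (\<forall>x\<in>K. 0 \<le> g x) \<and>
     (\<forall>x\<in>K. \<forall>y\<in>K. \<forall>t\<in>{0<..<1}.
        g (t * x + (1 - t) * y) \<le> h t * g x + h (1 - t) * g y)"

end

theory Submission
  imports Defs
begin


lemma young:
  fixes x y p q :: real
  assumes "x \<ge> 0" "y \<ge> 0" "p > 0" "q > 0" "1/p + 1/q = 1"
  shows "x*y \<le> x powr p / p + y powr q / q"
proof (cases "x = 0 \<or> y = 0")
  case True
  then show ?thesis using assms by auto
next
  case False
  then have x: "x > 0" and y: "y > 0" using assms by auto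
  have "1/p > 0" using assms by simp
  then have t: "0 \<le> 1/q" "1/q \<le> (1::real)" using assms(4,5) by (simp, linarith)
  have e: "1 - 1/q = 1/p" using assms(5) by linarith
  have "(1 - 1/q) * (p * ln x) + (1/q) * (q * ln y) = ln x + ln y"
    unfolding e using assms(3,4) by simp
  then have "x * y = exp ((1 - 1/q) * (p * ln x) + (1/q) * (q * ln y))"
    using x y by (simp add: exp_add)
  also have "\<dots> \<le> (1 - 1/q) * exp (p * ln x) + (1/q) * exp (q * ln y)"
    using convex_onD[OF exp_convex, of "1/q" "p * ln x" "q * ln y"] t by simp
  also have "\<dots> = x powr p / p + y powr q / q"
    unfolding e using x y by (simp add: powr_def mult.commute)
  finally show ?thesis .
qed

lemma opt_bound:
  fixes X A B p q :: real
  assumes "A \<ge> 0" "B \<ge> 0" "p > 0" "q > 0" "1/p + 1/q = 1"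
    and H: "\<And>s. s > 0 \<Longrightarrow> X \<le> s powr p * A / p + B / (s powr q * q)"
  shows "X \<le> A powr (1/p) * B powr (1/q)"
proof (cases "A = 0 \<or> B = 0")
  case True
  show ?thesis
  proof (rule ccontr)
    assume "\<not> ?thesis"
    then have X: "X > 0" using True by auto
    show False
    proof (cases "B = 0")
      case True
      define s where "s = (X * p / (2*A+1)) powr (1/p)"
      have sp: "s powr p = X * p / (2*A+1)" unfolding s_def using X assms
        by (simp add: powr_powr)
      have "s > 0" unfolding s_def using X assms by simp
      from H[OF this] have "X \<le> X * p / (2*A+1) * A / p" unfolding sp using True by simp
      also have "\<dots> = X * (A / (2*A+1))" using assms by simp
      also have "\<dots> < X * 1" using X assms by (intro mult_strict_left_mono) auto
      finally show False by simp
    next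
      case False
      then have A: "A = 0" using True by auto
      define s where "s = ((2*B+1) / (X * q)) powr (1/q)"
      have sq: "s powr q = (2*B+1) / (X * q)" unfolding s_def using X assms
        by (simp add: powr_powr)
      have "s > 0" unfolding s_def using X assms by simp
      from H[OF this] have "X \<le> B / ((2*B+1) / (X * q) * q)" unfolding sq using A by simp
      also have "\<dots> = X * (B / (2*B+1))"
      proof -
        have "2*B+1 > 0" using assms by simp
        have "(2*B+1) / (X * q) * q = (2*B+1) / X" using assms(4) by simp
        then show ?thesis by simp
      qed
      also have "\<dots> < X * 1" using X assms by (intro mult_strict_left_mono) auto
      finally show False by simp
    qed
  qed
next
  case False
  then have A: "A > 0" and B: "B > 0" using assms by auto
  define s where "s = B powr (1/(p*q)) / A powr (1/(p*q))"
  have "s > 0" unfolding s_def using A B by simp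
  have sp: "s powr p = B powr (1/q) / A powr (1/q)"
    unfolding s_def using A B assms by (simp add: powr_divide powr_powr)
  have sq: "s powr q = B powr (1/p) / A powr (1/p)"
    unfolding s_def using A B assms by (simp add: powr_divide powr_powr)
  have Ae: "A = A powr (1/p) * A powr (1/q)" using A assms by (simp add: powr_add[symmetric])
  have Be: "B = B powr (1/p) * B powr (1/q)" using B assms by (simp add: powr_add[symmetric])
  have e1: "s powr p * A / p = A powr (1/p) * B powr (1/q) / p"
    unfolding sp using A by (subst (2) Ae) (simp add: field_simps)
  moreover have e2: "B / (s powr q * q) = A powr (1/p) * B powr (1/q) / q"
    unfolding sq using A B by (subst (1) Be) (simp add: field_simps)
  ultimately have "X \<le> A powr (1/p) * B powr (1/q) / p + A powr (1/p) * B powr (1/q) / q"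
    using H[OF \<open>s > 0\<close>] e1 e2 by linarith
  also have "\<dots> = A powr (1/p) * B powr (1/q) * (1/p + 1/q)" by (simp add: field_simps)
  finally have "X \<le> A powr (1/p) * B powr (1/q) * (1/p + 1/q)" .
  then show ?thesis using assms(5) by simp
qed

lemma holder_integral:
  fixes u v :: "real \<Rightarrow> real" and p q :: real
  assumes pq: "p > 0" "q > 0" "1/p + 1/q = 1"
    and nn: "\<And>x. x \<in> S \<Longrightarrow> u x \<ge> 0" "\<And>x. x \<in> S \<Longrightarrow> v x \<ge> 0"
    and i1: "(\<lambda>x. u x * v x) integrable_on S"
    and i2: "(\<lambda>x. u x powr p) integrable_on S"
    and i3: "(\<lambda>x. v x powr q) integrable_on S"
  shows "integral S (\<lambda>x. u x * v x)
     \<le> integral S (\<lambda>x. u x powr p) powr (1/p) * integral S (\<lambda>x. v x powr q) powr (1/q)"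
proof (rule opt_bound[OF _ _ pq])
  show "integral S (\<lambda>x. u x powr p) \<ge> 0" by (rule integral_nonneg[OF i2]) simp
  show "integral S (\<lambda>x. v x powr q) \<ge> 0" by (rule integral_nonneg[OF i3]) simp
  fix s :: real assume s: "s > 0"
  have "integral S (\<lambda>x. u x * v x)
      \<le> integral S (\<lambda>x. s powr p / p * u x powr p + 1 / (s powr q * q) * v x powr q)"
  proof (rule integral_le[OF i1])
    show "(\<lambda>x. s powr p / p * u x powr p + 1 / (s powr q * q) * v x powr q) integrable_on S"
      using integrable_add[OF integrable_on_cmult_left[OF i2, of "s powr p / p"] integrable_on_cmult_left[OF i3, of "1 / (s powr q * q)"]]
      by simp
    fix x assume x: "x \<in> S"
    have "u x * v x = (s * u x) * (v x / s)" using s by simp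
    also have "\<dots> \<le> (s * u x) powr p / p + (v x / s) powr q / q"
      using young[OF _ _ pq, of "s * u x" "v x / s"] nn x s by simp
    also have "\<dots> = s powr p / p * u x powr p + 1 / (s powr q * q) * v x powr q"
      using s nn x by (simp add: powr_mult powr_divide)
    finally show "u x * v x \<le> s powr p / p * u x powr p + 1 / (s powr q * q) * v x powr q" .
  qed
  also have "\<dots> = s powr p * integral S (\<lambda>x. u x powr p) / p
       + integral S (\<lambda>x. v x powr q) / (s powr q * q)"
  proof -
    have j2: "(\<lambda>x. s powr p / p * u x powr p) integrable_on S"
      using integrable_on_cmult_left[OF i2, of "s powr p / p"] by simp
    have j3: "(\<lambda>x. 1 / (s powr q * q) * v x powr q) integrable_on S"
      using integrable_on_cmult_left[OF i3, of "1 / (s powr q * q)"] by simp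
    show ?thesis
      by (subst integral_add[OF j2 j3], unfold integral_mult_right) simp
  qed
  finally show "integral S (\<lambda>x. u x * v x) \<le> s powr p * integral S (\<lambda>x. u x powr p) / p
       + integral S (\<lambda>x. v x powr q) / (s powr q * q)" .
qed



lemma sq_powr: fixes y p :: real assumes "y \<ge> 0" "p > 0" shows "(y^2) powr p = y powr (2*p)"
proof (cases "y = 0")
  case True then show ?thesis using assms by simp
next
  case False
  then have "y > 0" using assms by simp
  then have "y^2 = y powr 2" by (simp add: powr_realpow)
  then show ?thesis by (simp add: powr_powr mult.commute)
qed

lemma deriv_pow_shift:
  fixes a r x :: real assumes "x > a"
  shows "((\<lambda>x. (x - a) powr r) has_real_derivative r * (x - a) powr (r - 1)) (at x)"
  using assms by (auto intro!: derivative_eq_intros)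

lemma deriv_pow_shift2:
  fixes b r x :: real assumes "x < b"
  shows "((\<lambda>x. (b - x) powr r) has_real_derivative - (r * (b - x) powr (r - 1))) (at x)"
  using assms by (auto intro!: derivative_eq_intros)

lemma Kp_integral:
  fixes a b p :: real
  assumes ab: "a < b" and p: "p > 0"
  shows "((\<lambda>x. ((min (x - a) (b - x))^2 / 2) powr p) has_integral
          (b - a) powr (2*p+1) / (2 powr (3*p) * (2*p+1))) {a..b}"
proof -
  define m where "m = (a + b) / 2"
  define c where "c = 2 powr p * (2*p+1)"
  have c: "c > 0" unfolding c_def using p by simp
  define F1 where "F1 x = (x - a) powr (2*p+1) / c" for x
  define F2 where "F2 x = - ((b - x) powr (2*p+1) / c)" for x
  have i1: "((\<lambda>x. (x - a) powr (2*p) / 2 powr p) has_integral F1 m - F1 a) {a..m}"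
  proof (rule fundamental_theorem_of_calculus_interior)
    show "a \<le> m" using ab unfolding m_def by simp
    show "continuous_on {a..m} F1" unfolding F1_def
      by (intro continuous_on_divide continuous_on_minus continuous_on_powr' continuous_intros) (use p c in auto)
    fix x assume x: "x \<in> {a<..<m}"
    have "(F1 has_real_derivative ((2*p+1) * (x - a) powr (2*p+1 - 1)) / c) (at x)"
      unfolding F1_def using x by (intro DERIV_cdivide deriv_pow_shift) auto
    moreover have "((2*p+1) * (x - a) powr (2*p+1 - 1)) / c = (x - a) powr (2*p) / 2 powr p"
      unfolding c_def using p by simp
    ultimately show "(F1 has_vector_derivative (x - a) powr (2*p) / 2 powr p) (at x)"
      by (simp add: has_real_derivative_iff_has_vector_derivative)
  qed
  have i2: "((\<lambda>x. (b - x) powr (2*p) / 2 powr p) has_integral F2 b - F2 m) {m..b}"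
  proof (rule fundamental_theorem_of_calculus_interior)
    show "m \<le> b" using ab unfolding m_def by simp
    show "continuous_on {m..b} F2" unfolding F2_def
      by (intro continuous_on_divide continuous_on_minus continuous_on_powr' continuous_intros) (use p c in auto)
    fix x assume x: "x \<in> {m<..<b}"
    have "(F2 has_real_derivative - (- ((2*p+1) * (b - x) powr (2*p+1 - 1)) / c)) (at x)"
      unfolding F2_def using x by (intro DERIV_minus DERIV_cdivide deriv_pow_shift2) auto
    moreover have "- (- ((2*p+1) * (b - x) powr (2*p+1 - 1)) / c) = (b - x) powr (2*p) / 2 powr p"
      unfolding c_def using p by simp
    ultimately show "(F2 has_vector_derivative (b - x) powr (2*p) / 2 powr p) (at x)"
      by (simp add: has_real_derivative_iff_has_vector_derivative)
  qed
  have j1: "((\<lambda>x. ((min (x - a) (b - x))^2 / 2) powr p) has_integral F1 m - F1 a) {a..m}"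
  proof (rule has_integral_cong[THEN iffD1, OF _ i1])
    fix x assume "x \<in> {a..m}"
    then have "min (x - a) (b - x) = x - a" "x - a \<ge> 0" unfolding m_def by auto
    then show "(x - a) powr (2*p) / 2 powr p = ((min (x - a) (b - x))^2 / 2) powr p"
      using p by (simp add: powr_divide sq_powr)
  qed
  have j2: "((\<lambda>x. ((min (x - a) (b - x))^2 / 2) powr p) has_integral F2 b - F2 m) {m..b}"
  proof (rule has_integral_cong[THEN iffD1, OF _ i2])
    fix x assume "x \<in> {m..b}"
    then have "min (x - a) (b - x) = b - x" "b - x \<ge> 0" unfolding m_def by auto
    then show "(b - x) powr (2*p) / 2 powr p = ((min (x - a) (b - x))^2 / 2) powr p"
      using p by (simp add: powr_divide sq_powr)
  qed
  have j: "((\<lambda>x. ((min (x - a) (b - x))^2 / 2) powr p) has_integral (F1 m - F1 a) + (F2 b - F2 m)) {a..b}"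
    by (rule has_integral_combine[OF _ _ j1 j2]) (use ab in \<open>auto simp: m_def\<close>)
  have e12: "m - a = (b - a) / 2" "b - m = (b - a) / 2" unfolding m_def by (auto simp: field_simps)
  have "(F1 m - F1 a) + (F2 b - F2 m) = 2 * ((b - a) / 2) powr (2*p+1) / c"
    unfolding F1_def F2_def e12 using p by simp
  also have "\<dots> = (b - a) powr (2*p+1) / (2 powr (3*p) * (2*p+1))"
  proof -
    have Y: "((b - a) / 2) powr (2*p+1) = (b - a) powr (2*p+1) / 2 powr (2*p+1)"
      using ab by (simp add: powr_divide)
    have TP: "2 powr (2*p+1) * 2 powr p = 2 * 2 powr (3*p)"
    proof -
      have "2 powr (2*p+1) * 2 powr p = 2 powr (1 + 3*p)" by (simp add: powr_add[symmetric] algebra_simps)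
      also have "\<dots> = 2 * 2 powr (3*p)" by (simp add: powr_add)
      finally show ?thesis .
    qed
    have "2 * ((b - a) / 2) powr (2*p+1) / c
        = 2 * (b - a) powr (2*p+1) / ((2 powr (2*p+1) * 2 powr p) * (2*p+1))"
      unfolding Y c_def by (simp add: field_simps)
    also have "\<dots> = 2 * (b - a) powr (2*p+1) / ((2 * 2 powr (3*p)) * (2*p+1))"
      by (simp only: TP)
    also have "\<dots> = (b - a) powr (2*p+1) / (2 powr (3*p) * (2*p+1))" by simp
    finally show ?thesis .
  qed
  finally show ?thesis using j by simp
qed



lemma midpoint_identity:
  fixes f f' f'' :: "real \<Rightarrow> real" and a b :: real
  assumes ab: "a < b"
    and d1: "\<And>x. x \<in> {a..b} \<Longrightarrow> (f has_real_derivative f' x) (at x)"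
    and d2: "\<And>x. x \<in> {a..b} \<Longrightarrow> (f' has_real_derivative f'' x) (at x)"
  shows "((\<lambda>x. (min (x - a) (b - x))^2 / 2 * f'' x) has_integral
          (integral {a..b} f - (b - a) * f ((a + b) / 2))) {a..b}"
proof -
  define m where "m = (a + b) / 2"
  have am: "a \<le> m" and mb: "m \<le> b" using ab unfolding m_def by auto
  have contf: "continuous_on {a..b} f"
    using d1 by (meson DERIV_isCont continuous_at_imp_continuous_on)
  have intf1: "(f has_integral integral {a..m} f) {a..m}"
    by (rule integrable_integral, rule integrable_continuous_interval)
       (rule continuous_on_subset[OF contf], use mb in auto)
  have intf2: "(f has_integral integral {m..b} f) {m..b}"
    by (rule integrable_integral, rule integrable_continuous_interval)
       (rule continuous_on_subset[OF contf], use am in auto)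
  define G1 where "G1 x = (x - a)^2 / 2 * f' x - (x - a) * f x" for x
  define G2 where "G2 x = (b - x)^2 / 2 * f' x + (b - x) * f x" for x
  have g1: "((\<lambda>x. (x - a)^2 / 2 * f'' x - f x) has_integral G1 m - G1 a) {a..m}"
  proof (rule fundamental_theorem_of_calculus[OF am])
    fix x assume x: "x \<in> {a..m}"
    then have xab: "x \<in> {a..b}" using mb by auto
    have D1: "((\<lambda>x. (x - a)^2 / 2) has_real_derivative (x - a)) (at x)"
      by (auto intro!: derivative_eq_intros)
    have D2: "((\<lambda>x. x - a) has_real_derivative 1) (at x)"
      by (auto intro!: derivative_eq_intros)
    have "(G1 has_real_derivative ((x - a) * f' x + f'' x * ((x - a)^2 / 2)) - (1 * f x + f' x * (x - a))) (at x)"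
      unfolding G1_def by (intro DERIV_diff DERIV_mult D1 D2 d1[OF xab] d2[OF xab])
    then have "(G1 has_real_derivative (x - a)^2 / 2 * f'' x - f x) (at x)"
      by (rule DERIV_cong) (simp add: algebra_simps)
    then show "(G1 has_vector_derivative (x - a)^2 / 2 * f'' x - f x) (at x within {a..m})"
      by (simp add: has_real_derivative_iff_has_vector_derivative has_vector_derivative_at_within)
  qed
  have g2: "((\<lambda>x. (b - x)^2 / 2 * f'' x - f x) has_integral G2 b - G2 m) {m..b}"
  proof (rule fundamental_theorem_of_calculus[OF mb])
    fix x assume x: "x \<in> {m..b}"
    then have xab: "x \<in> {a..b}" using am by auto
    have D1: "((\<lambda>x. (b - x)^2 / 2) has_real_derivative - (b - x)) (at x)"
      by (auto intro!: derivative_eq_intros)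
    have D2: "((\<lambda>x. b - x) has_real_derivative - 1) (at x)"
      by (auto intro!: derivative_eq_intros)
    have "(G2 has_real_derivative (- (b - x) * f' x + f'' x * ((b - x)^2 / 2)) + (- 1 * f x + f' x * (b - x))) (at x)"
      unfolding G2_def by (intro DERIV_add DERIV_mult D1 D2 d1[OF xab] d2[OF xab])
    then have "(G2 has_real_derivative (b - x)^2 / 2 * f'' x - f x) (at x)"
      by (rule DERIV_cong) (simp add: algebra_simps)
    then show "(G2 has_vector_derivative (b - x)^2 / 2 * f'' x - f x) (at x within {m..b})"
      by (simp add: has_real_derivative_iff_has_vector_derivative has_vector_derivative_at_within)
  qed
  have h1: "((\<lambda>x. (min (x - a) (b - x))^2 / 2 * f'' x) has_integral
             (G1 m - G1 a) + integral {a..m} f) {a..m}"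
  proof (rule has_integral_cong[THEN iffD1, OF _ has_integral_add[OF g1 intf1]])
    fix x assume "x \<in> {a..m}"
    then have "min (x - a) (b - x) = x - a" unfolding m_def by auto
    then show "(x - a)^2 / 2 * f'' x - f x + f x = (min (x - a) (b - x))^2 / 2 * f'' x" by simp
  qed
  have h2: "((\<lambda>x. (min (x - a) (b - x))^2 / 2 * f'' x) has_integral
             (G2 b - G2 m) + integral {m..b} f) {m..b}"
  proof (rule has_integral_cong[THEN iffD1, OF _ has_integral_add[OF g2 intf2]])
    fix x assume "x \<in> {m..b}"
    then have "min (x - a) (b - x) = b - x" unfolding m_def by auto
    then show "(b - x)^2 / 2 * f'' x - f x + f x = (min (x - a) (b - x))^2 / 2 * f'' x" by simp
  qed
  have comb: "integral {a..m} f + integral {m..b} f = integral {a..b} f"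
    by (rule Henstock_Kurzweil_Integration.integral_combine[OF am mb], rule integrable_continuous_interval[OF contf])
  have e12: "m - a = (b - a) / 2" "b - m = (b - a) / 2" unfolding m_def by (auto simp: field_simps)
  have "(G1 m - G1 a) + integral {a..m} f + ((G2 b - G2 m) + integral {m..b} f)
        = integral {a..b} f - (b - a) * f m"
    unfolding comb[symmetric] G1_def G2_def e12 by (simp add: algebra_simps)
  then show ?thesis using has_integral_combine[OF am mb h1 h2] unfolding m_def by simp
qed



lemma lbint_conv:
  fixes h :: "real \<Rightarrow> real"
  assumes "set_integrable lborel {0<..<1} h"
  shows "(LBINT t=0..1. h t) = integral {0..1} h" "h integrable_on {0..1}"
proof -
  have e: "einterval 0 1 = {0<..<(1::real)}"
    using einterval_eq_Icc[of 0 1] by (simp add: zero_ereal_def one_ereal_def)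
  have "(LBINT t=0..1. h t) = integral (einterval 0 1) h"
    by (rule interval_integral_eq_integral') (use assms e in auto)
  then show "(LBINT t=0..1. h t) = integral {0..1} h"
    unfolding e by (simp add: integral_open_interval_real)
  show "h integrable_on {0..1}"
    using set_borel_integral_eq_integral(1)[OF assms] integrable_on_open_interval_real by blast
qed

lemma img1:
  fixes a b :: real assumes ab: "a < b"
  shows "(\<lambda>x. b - (b - a) * x) ` {0..1} = {a..b}"
proof
  show "(\<lambda>x. b - (b - a) * x) ` {0..1} \<subseteq> {a..b}"
  proof
    fix y assume "y \<in> (\<lambda>x. b - (b - a) * x) ` {0..1}"
    then obtain x where x: "x \<in> {0..1}" "y = b - (b - a) * x" by auto
    have "(b - a) * x \<le> (b - a) * 1" using x ab by (intro mult_left_mono) auto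
    moreover have "(b - a) * x \<ge> 0" using x ab by simp
    ultimately show "y \<in> {a..b}" using x by auto
  qed
  show "{a..b} \<subseteq> (\<lambda>x. b - (b - a) * x) ` {0..1}"
  proof
    fix y assume y: "y \<in> {a..b}"
    show "y \<in> (\<lambda>x. b - (b - a) * x) ` {0..1}"
    proof (rule image_eqI[where x = "(b - y) / (b - a)"])
      show "y = b - (b - a) * ((b - y) / (b - a))" using ab by simp
      show "(b - y) / (b - a) \<in> {0..1}" using y ab by (auto simp: divide_simps)
    qed
  qed
qed

lemma img2:
  fixes a b :: real assumes ab: "a < b"
  shows "(\<lambda>x. a + (b - a) * x) ` {0..1} = {a..b}"
proof
  show "(\<lambda>x. a + (b - a) * x) ` {0..1} \<subseteq> {a..b}"
  proof
    fix y assume "y \<in> (\<lambda>x. a + (b - a) * x) ` {0..1}"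
    then obtain x where x: "x \<in> {0..1}" "y = a + (b - a) * x" by auto
    have "(b - a) * x \<le> (b - a) * 1" using x ab by (intro mult_left_mono) auto
    moreover have "(b - a) * x \<ge> 0" using x ab by simp
    ultimately show "y \<in> {a..b}" using x by auto
  qed
  show "{a..b} \<subseteq> (\<lambda>x. a + (b - a) * x) ` {0..1}"
  proof
    fix y assume y: "y \<in> {a..b}"
    show "y \<in> (\<lambda>x. a + (b - a) * x) ` {0..1}"
    proof (rule image_eqI[where x = "(y - a) / (b - a)"])
      show "y = a + (b - a) * ((y - a) / (b - a))" using ab by simp
      show "(y - a) / (b - a) \<in> {0..1}" using y ab by (auto simp: divide_simps)
    qed
  qed
qed

lemma affine_int1:
  fixes h :: "real \<Rightarrow> real" and a b :: real
  assumes ab: "a < b" and hi: "h integrable_on {0..1}"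
  shows "((\<lambda>x. h ((b - x) / (b - a))) has_integral (b - a) * integral {0..1} h) {a..b}"
proof -
  define m where "m = - 1 / (b - a)"
  define c where "c = b / (b - a)"
  have m0: "m \<noteq> 0" "m < 0" unfolding m_def using ab by auto
  have H: "((\<lambda>x. h (m * x + c)) has_integral (1 / \<bar>m\<bar>) *\<^sub>R integral {0..1} h)
            ((\<lambda>x. x / m - c / m) ` {0..1})"
    by (rule has_integral_affinity01[OF integrable_integral[OF hi] m0(1)])
  have "m * x + c = (b - x) / (b - a)" for x
  proof -
    have "b - a \<noteq> 0" using ab by simp
    then show ?thesis unfolding m_def c_def by (simp add: diff_divide_distrib)
  qed
  then have f: "(\<lambda>x. h (m * x + c)) = (\<lambda>x. h ((b - x) / (b - a)))" by simp
  have s: "(\<lambda>x. x / m - c / m) ` {0..1} = {a..b}"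
  proof -
    have "x / m - c / m = b - (b - a) * x" for x
    proof -
      have ne: "b - a \<noteq> 0" using ab by simp
      have "x / m = - ((b - a) * x)" unfolding m_def by simp
      moreover have "c / m = - b" unfolding m_def c_def using ne by simp
      ultimately show ?thesis by simp
    qed
    then show ?thesis using img1[OF ab] by simp
  qed
  have v: "(1 / \<bar>m\<bar>) *\<^sub>R integral {0..1} h = (b - a) * integral {0..1} h"
    unfolding m_def using ab by simp
  show ?thesis using H unfolding f s v .
qed

lemma affine_int2:
  fixes h :: "real \<Rightarrow> real" and a b :: real
  assumes ab: "a < b" and hi: "h integrable_on {0..1}"
  shows "((\<lambda>x. h ((x - a) / (b - a))) has_integral (b - a) * integral {0..1} h) {a..b}"
proof -
  define m where "m = 1 / (b - a)"
  define c where "c = - a / (b - a)"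
  have m0: "m \<noteq> 0" "m > 0" unfolding m_def using ab by auto
  have H: "((\<lambda>x. h (m * x + c)) has_integral (1 / \<bar>m\<bar>) *\<^sub>R integral {0..1} h)
            ((\<lambda>x. x / m - c / m) ` {0..1})"
    by (rule has_integral_affinity01[OF integrable_integral[OF hi] m0(1)])
  have "m * x + c = (x - a) / (b - a)" for x
  proof -
    have "b - a \<noteq> 0" using ab by simp
    then show ?thesis unfolding m_def c_def by (simp add: diff_divide_distrib)
  qed
  then have f: "(\<lambda>x. h (m * x + c)) = (\<lambda>x. h ((x - a) / (b - a)))" by simp
  have s: "(\<lambda>x. x / m - c / m) ` {0..1} = {a..b}"
  proof -
    have "x / m - c / m = a + (b - a) * x" for x
    proof -
      have ne: "b - a \<noteq> 0" using ab by simp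
      have "x / m = (b - a) * x" unfolding m_def by simp
      moreover have "c / m = - a" unfolding m_def c_def using ne by simp
      ultimately show ?thesis by simp
    qed
    then show ?thesis using img2[OF ab] by simp
  qed
  have v: "(1 / \<bar>m\<bar>) *\<^sub>R integral {0..1} h = (b - a) * integral {0..1} h"
    unfolding m_def using ab by simp
  show ?thesis using H unfolding f s v .
qed

lemma hconv_bound:
  fixes h g :: "real \<Rightarrow> real" and a b :: real
  assumes ab: "a < b" and hi: "h integrable_on {0..1}" and hc: "h_convex_on h {a..b} g"
    and gm: "g \<in> borel_measurable (lebesgue_on {a..b})"
  shows "g integrable_on {a..b}"
    "integral {a..b} g \<le> (b - a) * ((g a + g b) * integral {0..1} h)"
proof -
  define I where "I = integral {0..1} h"
  define \<phi> where "\<phi> x = h ((b - x) / (b - a)) * g a + h ((x - a) / (b - a)) * g b" for x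
  define \<psi> where "\<psi> x = (if x = a \<or> x = b then g x else \<phi> x)" for x
  have gnn: "\<And>x. x \<in> {a..b} \<Longrightarrow> g x \<ge> 0" using hc unfolding h_convex_on_def by auto
  have hcv: "\<And>x y t. x \<in> {a..b} \<Longrightarrow> y \<in> {a..b} \<Longrightarrow> t \<in> {0<..<1} \<Longrightarrow>
      g (t * x + (1 - t) * y) \<le> h t * g x + h (1 - t) * g y"
    using hc unfolding h_convex_on_def by blast
  have phi: "(\<phi> has_integral (b - a) * I * g a + (b - a) * I * g b) {a..b}"
    unfolding \<phi>_def I_def
    by (intro has_integral_add has_integral_mult_left affine_int1[OF ab hi] affine_int2[OF ab hi])
  have psi: "(\<psi> has_integral (b - a) * I * g a + (b - a) * I * g b) {a..b}"
    by (rule has_integral_spike_finite[OF _ _ phi, of "{a, b}"]) (auto simp: \<psi>_def)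
  have bnd: "g x \<le> \<psi> x" if x: "x \<in> {a..b}" for x
  proof (cases "x = a \<or> x = b")
    case True then show ?thesis by (simp add: \<psi>_def)
  next
    case False
    then have x': "a < x" "x < b" using x by auto
    define t where "t = (b - x) / (b - a)"
    have t: "t \<in> {0<..<1}" unfolding t_def using x' by (auto simp: divide_simps)
    have tx: "t * a + (1 - t) * b = x"
    proof -
      have "b - a \<noteq> 0" using ab by simp
      then have "t * (b - a) = b - x" unfolding t_def by simp
      moreover have "t * a + (1 - t) * b = b - t * (b - a)" by (simp add: algebra_simps)
      ultimately show ?thesis by simp
    qed
    have t1: "1 - t = (x - a) / (b - a)"
    proof -
      have "b - a \<noteq> 0" using ab by simp
      then show ?thesis unfolding t_def by (simp add: field_simps)
    qed
    have "g x \<le> h t * g a + h (1 - t) * g b"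
      using hcv[of a b t] t ab unfolding tx by auto
    then have "g x \<le> h t * g a + h ((x - a) / (b - a)) * g b" unfolding t1 .
    then show ?thesis using False unfolding \<psi>_def \<phi>_def t_def by simp
  qed
  show gi: "g integrable_on {a..b}"
    by (rule measurable_bounded_by_integrable_imp_integrable[OF gm has_integral_integrable[OF psi]])
       (use bnd gnn in auto)
  have "integral {a..b} g \<le> (b - a) * I * g a + (b - a) * I * g b"
    using has_integral_le[OF integrable_integral[OF gi] psi] bnd by auto
  then show "integral {a..b} g \<le> (b - a) * ((g a + g b) * integral {0..1} h)"
    unfolding I_def by (simp add: algebra_simps)
qed



lemma final_alg:
  fixes D p q S :: real
  assumes D: "D > 0" and p: "p > 0" and q: "q > 0" and pq: "1/p + 1/q = 1" and S: "S \<ge> 0"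
  shows "(D powr (2*p+1) / (2 powr (3*p) * (2*p+1))) powr (1/p) * (D * S) powr (1/q) / D
       = D^2 / 8 * (1 / (2*p+1)) powr (1/p) * S powr (1/q)"
proof -
  have e1: "(D powr (2*p+1)) powr (1/p) = D^2 * D powr (1/p)"
  proof -
    have "(D powr (2*p+1)) powr (1/p) = D powr (2 + 1/p)"
      using p by (simp add: powr_powr field_simps)
    also have "\<dots> = D powr 2 * D powr (1/p)" by (simp add: powr_add)
    also have "\<dots> = D^2 * D powr (1/p)" using D by (simp add: powr_realpow)
    finally show ?thesis .
  qed
  have e2: "(2 powr (3*p) :: real) powr (1/p) = 8"
    using p by (simp add: powr_powr)
  have e3: "(D * S) powr (1/q) = D powr (1/q) * S powr (1/q)"
    using D S by (simp add: powr_mult)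
  have e4: "D powr (1/p) * D powr (1/q) = D"
    using D pq by (simp add: powr_add[symmetric])
  have e5: "(1 / (2*p+1)) powr (1/p) = 1 / (2*p+1) powr (1/p)"
    using p by (simp add: powr_divide)
  have "(D powr (2*p+1) / (2 powr (3*p) * (2*p+1))) powr (1/p)
      = (D powr (2*p+1)) powr (1/p) / ((2 powr (3*p)) powr (1/p) * (2*p+1) powr (1/p))"
    using p by (simp add: powr_divide powr_mult)
  also have "\<dots> = D^2 * D powr (1/p) / (8 * (2*p+1) powr (1/p))" unfolding e1 e2 ..
  finally have "(D powr (2*p+1) / (2 powr (3*p) * (2*p+1))) powr (1/p) * (D * S) powr (1/q) / D
      = D^2 * (D powr (1/p) * D powr (1/q)) / (8 * (2*p+1) powr (1/p)) * S powr (1/q) / D"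
    unfolding e3 by (simp add: field_simps)
  also have "\<dots> = D^2 / 8 * (1 / (2*p+1)) powr (1/p) * S powr (1/q)"
    unfolding e4 e5 using D by (simp add: field_simps)
  finally show ?thesis .
qed



theorem theorem11:
  fixes h :: "real \<Rightarrow> real" and J :: "real set"
    and f f' f'' :: "real \<Rightarrow> real" and I :: "real set"
    and a b p q :: real
  assumes J: "is_interval J" "{0<..<1} \<subseteq> J"
      and h_nonneg: "\<forall>t\<in>J. 0 \<le> h t"
      and h_nonzero: "\<exists>t\<in>J. h t \<noteq> 0"
      and h_int: "set_integrable lborel {0<..<1} h"
      and I: "is_interval I" "I \<subseteq> {0..}"
      and ab: "a \<in> interior I" "b \<in> interior I" "a < b"
      and f': "\<forall>x\<in>interior I. (f has_real_derivative f' x) (at x)"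
      and f'': "\<forall>x\<in>interior I. (f' has_real_derivative f'' x) (at x)"
      and f''_int: "set_integrable lborel {a..b} f''"
      and q: "q > 1" and p: "p = q / (q - 1)"
      and hconv: "h_convex_on h {a..b} (\<lambda>x. \<bar>f'' x\<bar> powr q)"
  shows "\<bar>1 / (b - a) * integral {a..b} f - f ((a + b) / 2)\<bar>
         \<le> (b - a)^2 / 8 * (1 / (2 * p + 1)) powr (1 / p)
            * ((\<bar>f'' a\<bar> powr q + \<bar>f'' b\<bar> powr q) * (LBINT t=0..1. h t)) powr (1 / q)"
proof -
  define D where "D = b - a"
  have D: "D > 0" using ab unfolding D_def by simp
  define K where "K x = (min (x - a) (b - x))^2 / 2" for x
  have p0: "p > 0" using q unfolding p by simp
  have q0: "q > 0" using q by simp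
  have pq: "1/p + 1/q = 1" using q unfolding p by (simp add: field_simps)
  have sub: "{a..b} \<subseteq> interior I"
  proof -
    have "convex (interior I)" using I(1) by (intro convex_interior is_interval_convex)
    then have "closed_segment a b \<subseteq> interior I" using ab(1,2) by (simp add: convex_contains_segment)
    then show ?thesis using ab(3) by (simp add: closed_segment_eq_real_ivl)
  qed
  have d1: "\<And>x. x \<in> {a..b} \<Longrightarrow> (f has_real_derivative f' x) (at x)" using f' sub by blast
  have d2: "\<And>x. x \<in> {a..b} \<Longrightarrow> (f' has_real_derivative f'' x) (at x)" using f'' sub by blast
  have ident: "((\<lambda>x. K x * f'' x) has_integral (integral {a..b} f - (b - a) * f ((a + b) / 2))) {a..b}"
    unfolding K_def by (rule midpoint_identity[OF ab(3) d1 d2])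
  have f''i: "f'' integrable_on {a..b}" by (rule set_borel_integral_eq_integral(1)[OF f''_int])
  have f''n: "(\<lambda>x. norm (f'' x)) integrable_on {a..b}"
    by (rule set_borel_integral_eq_integral(1)[OF set_integrable_norm[OF f''_int]])
  have f''a: "f'' absolutely_integrable_on {a..b}" using f''i f''n by (rule absolutely_integrable_onI)
  have Sab: "{a..b} \<in> sets lebesgue" by (metis cbox_interval fmeasurableD lmeasurable_cbox)
  have Kc: "continuous_on {a..b} K" unfolding K_def by (intro continuous_intros) simp_all
  have Km: "K \<in> borel_measurable (lebesgue_on {a..b})"
    by (rule continuous_imp_measurable_on_sets_lebesgue[OF Kc]) (rule Sab)
  have Kb: "bounded (K ` {a..b})"
    by (rule compact_imp_bounded, rule compact_continuous_image[OF Kc]) (rule compact_Icc)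
  have Kf: "(\<lambda>x. K x * f'' x) absolutely_integrable_on {a..b}"
    by (rule absolutely_integrable_bounded_measurable_product_real[OF Km _ Kb f''a]) (rule Sab)
  have Knn: "\<And>x. K x \<ge> 0" unfolding K_def by simp
  have i1: "(\<lambda>x. K x * \<bar>f'' x\<bar>) integrable_on {a..b}"
  proof -
    have "(\<lambda>x. norm (K x * f'' x)) integrable_on {a..b}" using absolutely_integrable_on_def[THEN iffD1, OF Kf] by (rule conjunct2)
    moreover have "(\<lambda>x. norm (K x * f'' x)) = (\<lambda>x. K x * \<bar>f'' x\<bar>)"
      using Knn by (simp add: abs_mult)
    ultimately show ?thesis by simp
  qed
  have KP: "((\<lambda>x. K x powr p) has_integral D powr (2*p+1) / (2 powr (3*p) * (2*p+1))) {a..b}"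
    unfolding K_def D_def by (rule Kp_integral[OF ab(3) p0])
  have hi: "h integrable_on {0..1}" and LB: "(LBINT t=0..1. h t) = integral {0..1} h"
    using lbint_conv[OF h_int] by auto
  have gm: "(\<lambda>x. \<bar>f'' x\<bar> powr q) \<in> borel_measurable (lebesgue_on {a..b})"
  proof -
    have "continuous_on UNIV (\<lambda>y::real. \<bar>y\<bar> powr q)"
      using q0 by (intro continuous_on_powr' continuous_intros) auto
    then show ?thesis
      by (rule borel_measurable_continuous_on[OF _ integrable_imp_measurable[OF f''i]])
  qed
  note HB = hconv_bound[OF ab(3) hi hconv gm]
  define Q where "Q = integral {a..b} (\<lambda>x. \<bar>f'' x\<bar> powr q)"
  define S where "S = (\<bar>f'' a\<bar> powr q + \<bar>f'' b\<bar> powr q) * (LBINT t=0..1. h t)"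
  have QS: "Q \<le> D * S" using HB(2) unfolding Q_def S_def D_def LB by simp
  have Q0: "Q \<ge> 0" unfolding Q_def by (rule integral_nonneg[OF HB(1)]) simp
  have S0: "S \<ge> 0"
  proof -
    have "integral {0<..<1} h \<ge> 0"
      using integrable_on_open_interval_real[THEN iffD2, OF hi] J(2) h_nonneg
      by (intro integral_nonneg) auto
    then have "(LBINT t=0..1. h t) \<ge> 0" unfolding LB by (simp add: integral_open_interval_real)
    then show ?thesis unfolding S_def by simp
  qed
  have hold: "integral {a..b} (\<lambda>x. K x * \<bar>f'' x\<bar>)
     \<le> integral {a..b} (\<lambda>x. K x powr p) powr (1/p) * Q powr (1/q)"
    unfolding Q_def
    by (rule holder_integral[OF p0 q0 pq _ _ i1 has_integral_integrable[OF KP] HB(1)]) (auto simp: Knn)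
  have "\<bar>integral {a..b} f - (b - a) * f ((a + b) / 2)\<bar> = \<bar>integral {a..b} (\<lambda>x. K x * f'' x)\<bar>"
    using integral_unique[OF ident] by simp
  also have "\<dots> \<le> integral {a..b} (\<lambda>x. K x * \<bar>f'' x\<bar>)"
    using integral_norm_bound_integral[OF has_integral_integrable[OF ident] i1]
    by (simp add: abs_mult abs_of_nonneg[OF Knn])
  also have "\<dots> \<le> (D powr (2*p+1) / (2 powr (3*p) * (2*p+1))) powr (1/p) * Q powr (1/q)"
    using hold integral_unique[OF KP] by simp
  also have "\<dots> \<le> (D powr (2*p+1) / (2 powr (3*p) * (2*p+1))) powr (1/p) * (D * S) powr (1/q)"
    by (rule mult_left_mono[OF powr_mono2]) (use q0 QS Q0 in auto)
  finally have main: "\<bar>integral {a..b} f - (b - a) * f ((a + b) / 2)\<bar>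
      \<le> (D powr (2*p+1) / (2 powr (3*p) * (2*p+1))) powr (1/p) * (D * S) powr (1/q)" .
  have "\<bar>1 / (b - a) * integral {a..b} f - f ((a + b) / 2)\<bar>
      = \<bar>integral {a..b} f - (b - a) * f ((a + b) / 2)\<bar> / D"
  proof -
    have "1 / (b - a) * integral {a..b} f - f ((a + b) / 2)
        = (integral {a..b} f - (b - a) * f ((a + b) / 2)) / D"
      using ab(3) unfolding D_def by (simp add: field_simps)
    then show ?thesis using D by simp
  qed
  also have "\<dots> \<le> (D powr (2*p+1) / (2 powr (3*p) * (2*p+1))) powr (1/p) * (D * S) powr (1/q) / D"
    by (rule divide_right_mono[OF main]) (use D in simp)
  also have "\<dots> = D^2 / 8 * (1 / (2*p+1)) powr (1/p) * S powr (1/q)"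
    by (rule final_alg[OF D p0 q0 pq S0])
  finally show ?thesis unfolding D_def S_def .
qed

end
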